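(* In the setting of the context, the instanton operators $\mathsf p_{\mathbf d}$, $\mathbf d\in\Lambda$, commute and satisfy $\mathsf p_{\mathbf d}\mathsf p_{\mathbf d'}=\mathsf p_{\mathbf d+\mathbf d'}$ for all $\mathbf d,\mathbf d'\in\Lambda$; hence they form an abelian monoid isomorphic to $\Lambda$.
   Context: $Q=(Q^a_i)$ integer $r\times N$ matrix; $\mathcal K\subseteq\mathbb{R}^r$ a chamber (open connected set of regular values of the moment map $\mu^a(Z)=\sum_iQ^a_i|Z^i|^2$), $\mathcal K^\vee=\{\mathbf d:\sum_ad_at^a\ge0\ \forall\mathbf t\in\mathcal K\}$, $\Lambda=\mathcal K^\vee\cap\mathbb{Z}^r$ (a monoid under addition). $\mathcal D_i=\epsilon_i+\sum_aQ^a_i\partial/\partial t^a$ acting on functions of $\mathbf t\in\mathbb{R}^r$; Pochhammer $(z)_n=\Gamma(z+n)/\Gamma(z)$, i.e.\ $\prod_{j=0}^{n-1}(z+j)$ for $n>0$, $1$ for $n=0$, $\prod_{j=n}^{-1}(z+j)^{-1}$ for $n<0$. Instanton operators: $\mathsf p_{\mathbf d}=e^{-\lambda\sum_ad_at^a}\prod_{i=1}^N(\mathcal D_i/\lambda)_{-\sum_ad_aQ^a_i}$. *)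

theory Defs
  imports "HOL-Analysis.Analysis"
begin

text \<open>Index types: 'r indexes a = 1..r, 'n indexes i = 1..N.  The charge matrix is
  Q :: int^'n^'r with Q$a$i = Q^a_i.\<close>

definition moment_map :: "int^'n^'r \<Rightarrow> complex^'n \<Rightarrow> real^'r" where
  "moment_map Q Z = (\<chi> a. \<Sum>i\<in>UNIV. of_int (Q$a$i) * (cmod (Z$i))^2)"

definition regular_value :: "int^'n^'r \<Rightarrow> real^'r \<Rightarrow> bool" where
  "regular_value Q t \<longleftrightarrow>
     (\<forall>Z. moment_map Q Z = t \<longrightarrow>
        (\<exists>f'. (moment_map Q has_derivative f') (at Z) \<and> surj f'))"

definition chamber :: "int^'n^'r \<Rightarrow> (real^'r) set \<Rightarrow> bool" where
  "chamber Q K \<longleftrightarrow> open K \<and> connected K \<and> K \<noteq> {} \<and> (\<forall>t\<in>K. regular_value Q t)"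

definition Lambda :: "(real^'r) set \<Rightarrow> (int^'r) set" where
  "Lambda K = {d. \<forall>t\<in>K. (\<Sum>a\<in>UNIV. of_int (d$a) * t$a) \<ge> 0}"

definition poch :: "complex \<Rightarrow> int \<Rightarrow> complex" where
  "poch z n = (if n \<ge> 0 then pochhammer z (nat n)
               else inverse (pochhammer (z + of_int n) (nat (- n))))"

text \<open>Eigenvalue of D_i = eps_i + sum_a Q^a_i d/dt^a on the exponential
  e_s(t) = exp(sum_a s_a t_a), divided by lam.\<close>
definition Dsym :: "int^'n^'r \<Rightarrow> complex^'n \<Rightarrow> complex^'r \<Rightarrow> 'n \<Rightarrow> complex" where
  "Dsym Q eps s i = eps$i + (\<Sum>a\<in>UNIV. of_int (Q$a$i) * s$a)"

definition expo :: "complex^'r \<Rightarrow> real^'r \<Rightarrow> complex" where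
  "expo s t = exp (\<Sum>a\<in>UNIV. s$a * of_real (t$a))"

text \<open>Eigenvalue of prod_i (D_i/lam)_{-sum_a d_a Q^a_i} on e_s.\<close>
definition inst_coeff :: "int^'n^'r \<Rightarrow> complex^'n \<Rightarrow> complex \<Rightarrow> int^'r \<Rightarrow> complex^'r \<Rightarrow> complex" where
  "inst_coeff Q eps lam d s =
     (\<Prod>i\<in>UNIV. poch (Dsym Q eps s i / lam) (- (\<Sum>a\<in>UNIV. d$a * Q$a$i)))"

definition cvec :: "int^'r \<Rightarrow> complex^'r" where
  "cvec d = (\<chi> a. of_int (d$a))"

text \<open>Operators act on formal exponential sums  sum_s F(s) e_s(t),  represented by
  their coefficient function F.  Since
  p_d e_s = e^{-lam d.t} inst_coeff(s) e_s = inst_coeff(s) e_{s - lam d},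
  the coefficient of e_u in p_d(sum_s F(s) e_s) is inst_coeff(u + lam d) F(u + lam d).\<close>
definition inst_op :: "int^'n^'r \<Rightarrow> complex^'n \<Rightarrow> complex \<Rightarrow> int^'r
                        \<Rightarrow> (complex^'r \<Rightarrow> complex) \<Rightarrow> (complex^'r \<Rightarrow> complex)" where
  "inst_op Q eps lam d F = (\<lambda>u. inst_coeff Q eps lam d (u + (\<chi> a. lam * cvec d $ a))
                                * F (u + (\<chi> a. lam * cvec d $ a)))"

text \<open>Exponents s where no Pochhammer pole/zero can occur: D_i(s)/lam is not an integer
  whenever the i-th column of Q is nonzero (for zero columns the index is always 0).\<close>
definition generic_exponent :: "int^'n^'r \<Rightarrow> complex^'n \<Rightarrow> complex \<Rightarrow> complex^'r \<Rightarrow> bool" where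
  "generic_exponent Q eps lam s \<longleftrightarrow>
     (\<forall>i. (\<exists>a. Q$a$i \<noteq> 0) \<longrightarrow> (\<forall>k::int. Dsym Q eps s i / lam \<noteq> of_int k))"

definition generic_support :: "int^'n^'r \<Rightarrow> complex^'n \<Rightarrow> complex \<Rightarrow> (complex^'r \<Rightarrow> complex) \<Rightarrow> bool" where
  "generic_support Q eps lam F \<longleftrightarrow> (\<forall>s. F s \<noteq> 0 \<longrightarrow> generic_exponent Q eps lam s)"

end

theory Submission
  imports Defs
begin

lemma notInts_shift: "(z::complex) \<notin> \<int> \<Longrightarrow> z + of_int n \<notin> \<int>"
proof
  assume "z \<notin> \<int>" "z + of_int n \<in> \<int>"
  then have "z + of_int n - of_int n \<in> \<int>" by (intro Ints_diff) auto
  with \<open>z \<notin> \<int>\<close> show False by simp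
qed

lemma notInts_nonpos: "(z::complex) \<notin> \<int> \<Longrightarrow> z \<notin> \<int>\<^sub>\<le>\<^sub>0"
  using nonpos_Ints_subset_Ints by blast

lemma poch_Gamma:
  assumes "(z::complex) \<notin> \<int>"
  shows "poch z n = Gamma (z + of_int n) / Gamma z"
proof (cases "n \<ge> 0")
  case True
  then obtain k where k: "n = int k" by (metis nonneg_eq_int)
  show ?thesis using True k pochhammer_Gamma[OF notInts_nonpos[OF assms], of k]
    by (simp add: poch_def)
next
  case False
  define k where "k = nat (- n)"
  have nk: "of_int n + of_nat k = (0::complex)" using False k_def by simp
  have z1: "z + of_int n \<notin> \<int>" using notInts_shift[OF assms] .
  have "pochhammer (z + of_int n) k = Gamma (z + of_int n + of_nat k) / Gamma (z + of_int n)"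
    using pochhammer_Gamma[OF notInts_nonpos[OF z1]] .
  also have "z + of_int n + of_nat k = z" using nk by (simp add: algebra_simps)
  finally have "pochhammer (z + of_int n) k = Gamma z / Gamma (z + of_int n)" .
  then show ?thesis using False by (simp add: poch_def k_def)
qed

lemma poch_add:
  assumes "(z::complex) \<notin> \<int>"
  shows "poch z a * poch (z + of_int a) b = poch z (a + b)"
proof -
  have z1: "z + of_int a \<notin> \<int>" using notInts_shift[OF assms] .
  have g: "Gamma (z + of_int a) \<noteq> 0" using Gamma_nonzero[OF notInts_nonpos[OF z1]] .
  show ?thesis
    unfolding poch_Gamma[OF assms] poch_Gamma[OF z1] using g
    by (simp add: algebra_simps)
qed

lemma poch_nonzero:
  assumes "Im z \<noteq> 0"
  shows "poch z n \<noteq> 0"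
proof -
  have "z \<notin> \<int>" using assms by (auto elim: Ints_cases)
  then have "z + of_int n \<notin> \<int>\<^sub>\<le>\<^sub>0" "z \<notin> \<int>\<^sub>\<le>\<^sub>0"
    using notInts_shift notInts_nonpos by blast+
  then show ?thesis
    unfolding poch_Gamma[OF \<open>z \<notin> \<int>\<close>] by (simp add: Gamma_nonzero)
qed

lemma Dsym_shift:
  assumes "lam \<noteq> 0"
  shows "Dsym Q eps (u + (\<chi> a. lam * cvec d $ a)) i / lam
         = Dsym Q eps u i / lam + of_int (\<Sum>a\<in>UNIV. d$a * Q$a$i)"
proof -
  have "Dsym Q eps (u + (\<chi> a. lam * cvec d $ a)) i
        = Dsym Q eps u i + lam * of_int (\<Sum>a\<in>UNIV. d$a * Q$a$i)"
    by (simp add: Dsym_def cvec_def algebra_simps sum.distrib sum_distrib_left)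
  then show ?thesis using assms by (simp add: field_simps)
qed


lemma interior_Union_closed_empty:
  fixes A :: "'a::topological_space set set"
  shows "finite A \<Longrightarrow> (\<forall>S\<in>A. closed S \<and> interior S = {}) \<Longrightarrow> interior (\<Union>A) = {}"
proof (induction A rule: finite_induct)
  case empty
  then show ?case by simp
next
  case (insert S A)
  then have "interior (S \<union> \<Union>A) = interior S"
    by (intro interior_closed_Un_empty_interior) auto
  then show ?case using insert by simp
qed

lemma exists_w:
  fixes Q :: "int^'n^'r" and c :: "'n \<Rightarrow> real"
  shows "\<exists>w::real^'r. \<forall>i. (\<exists>a. Q$a$i \<noteq> 0) \<longrightarrow> (\<Sum>a\<in>UNIV. of_int (Q$a$i) * w$a) \<noteq> c i"
proof -
  define q where "q i = (\<chi> a. real_of_int (Q$a$i))" for i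
  define A where "A = (\<lambda>i. {w::real^'r. q i \<bullet> w = c i}) ` {i. \<exists>a. Q$a$i \<noteq> 0}"
  have "finite A" unfolding A_def by simp
  moreover have "\<forall>S\<in>A. closed S \<and> interior S = {}"
  proof
    fix S assume "S \<in> A"
    then obtain i a where S: "S = {w. q i \<bullet> w = c i}" and "Q$a$i \<noteq> 0"
      unfolding A_def by auto
    then have "q i \<noteq> 0" unfolding q_def by (metis of_int_eq_0_iff vec_lambda_beta zero_index)
    then show "closed S \<and> interior S = {}" unfolding S
      by (simp add: closed_hyperplane)
  qed
  ultimately have "interior (\<Union>A) = {}" by (rule interior_Union_closed_empty)
  then have "\<Union>A \<noteq> UNIV" by auto
  then obtain w where w: "w \<notin> \<Union>A" by auto
  show ?thesis
  proof (intro exI allI impI)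
    fix i assume "\<exists>a. Q$a$i \<noteq> 0"
    then have "q i \<bullet> w \<noteq> c i" using w unfolding A_def by auto
    then show "(\<Sum>a\<in>UNIV. of_int (Q$a$i) * w$a) \<noteq> c i"
      by (simp add: q_def inner_vec_def)
  qed
qed

lemma exists_nonzero_coeff:
  fixes Q :: "int^'n^'r" and eps :: "complex^'n" and lam :: complex and d :: "int^'r"
  assumes "lam \<noteq> 0"
  shows "\<exists>s. inst_coeff Q eps lam d s \<noteq> 0"
proof -
  obtain w :: "real^'r" where w: "\<And>i. (\<exists>a. Q$a$i \<noteq> 0) \<Longrightarrow>
      (\<Sum>a\<in>UNIV. of_int (Q$a$i) * w$a) \<noteq> - Im (eps$i / lam)"
    using exists_w[of Q "\<lambda>i. - Im (eps$i / lam)"] by blast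
  define s where "s = (\<chi> a. lam * \<i> * of_real (w$a))"
  have "poch (Dsym Q eps s i / lam) (- (\<Sum>a\<in>UNIV. d$a * Q$a$i)) \<noteq> 0" for i
  proof (cases "\<exists>a. Q$a$i \<noteq> 0")
    case True
    have "Dsym Q eps s i / lam = eps$i / lam + \<i> * of_real (\<Sum>a\<in>UNIV. of_int (Q$a$i) * w$a)"
      using assms by (simp add: Dsym_def s_def field_simps sum_distrib_left)
    then have "Im (Dsym Q eps s i / lam) \<noteq> 0" using w[OF True] by simp
    then show ?thesis by (rule poch_nonzero)
  next
    case False
    then show ?thesis by (simp add: poch_def)
  qed
  then show ?thesis unfolding inst_coeff_def by (auto simp: prod_zero_iff)
qed


lemma inst_comp:
  fixes Q :: "int^'n^'r" and eps :: "complex^'n" and lam :: complex and d d' :: "int^'r"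
  assumes lam: "lam \<noteq> 0" and gen: "generic_support Q eps lam F"
  shows "inst_op Q eps lam d (inst_op Q eps lam d' F) = inst_op Q eps lam (d + d') F"
proof
  fix u :: "complex^'r"
  define L where "L e = (\<chi> a. lam * cvec e $ a)" for e :: "int^'r"
  define v where "v = u + L (d + d')"
  have e1: "(u + L d) + L d' = v" unfolding v_def L_def
    by (simp add: vec_eq_iff cvec_def algebra_simps)
  have "inst_coeff Q eps lam d (u + L d) * inst_coeff Q eps lam d' v * F v
        = inst_coeff Q eps lam (d + d') v * F v"
  proof (cases "F v = 0")
    case True then show ?thesis by simp
  next
    case False
    then have ge: "generic_exponent Q eps lam v" using gen unfolding generic_support_def by auto
    have "inst_coeff Q eps lam d (u + L d) * inst_coeff Q eps lam d' v
          = inst_coeff Q eps lam (d + d') v"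
      unfolding inst_coeff_def prod.distrib[symmetric]
    proof (rule prod.cong[OF refl])
      fix i
      define z where "z = Dsym Q eps v i / lam"
      define n where "n = (\<Sum>a\<in>UNIV. d$a * Q$a$i)"
      define n' where "n' = (\<Sum>a\<in>UNIV. d'$a * Q$a$i)"
      have zs: "Dsym Q eps (u + L d) i / lam = z + of_int (- n')"
        using Dsym_shift[OF lam, of Q eps "u + L d" d' i] e1
        unfolding z_def n'_def L_def by simp
      have nn: "(\<Sum>a\<in>UNIV. (d + d')$a * Q$a$i) = n + n'"
        unfolding n_def n'_def by (simp add: algebra_simps sum.distrib)
      have "poch (z + of_int (- n')) (- n) * poch z (- n') = poch z (- (n + n'))"
      proof (cases "\<exists>a. Q$a$i \<noteq> 0")
        case True
        then have "z \<notin> \<int>" using ge unfolding generic_exponent_def z_def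
          by (auto elim!: Ints_cases)
        from poch_add[OF this, of "- n'" "- n"] show ?thesis
          by (simp add: algebra_simps)
      next
        case False
        then show ?thesis by (simp add: n_def n'_def poch_def)
      qed
      then show "poch (Dsym Q eps (u + L d) i / lam) (- n) *
                 poch (Dsym Q eps v i / lam) (- n') =
                 poch (Dsym Q eps v i / lam) (- (\<Sum>a\<in>UNIV. (d + d')$a * Q$a$i))"
        using zs nn z_def by simp
    qed
    then show ?thesis by simp
  qed
  then show "inst_op Q eps lam d (inst_op Q eps lam d' F) u = inst_op Q eps lam (d + d') F u"
    unfolding inst_op_def L_def[symmetric] e1 v_def[symmetric] by (simp add: mult.assoc)
qed

theorem mainTheorem7:
  fixes Q :: "int^'n^'r" and eps :: "complex^'n" and lam :: complex
    and K :: "(real^'r) set"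
  assumes "lam \<noteq> 0" and "chamber Q K"
  shows "(\<forall>d\<in>Lambda K. \<forall>d'\<in>Lambda K. \<forall>F. generic_support Q eps lam F \<longrightarrow>
            inst_op Q eps lam d (inst_op Q eps lam d' F) = inst_op Q eps lam (d + d') F \<and>
            inst_op Q eps lam d (inst_op Q eps lam d' F) = inst_op Q eps lam d' (inst_op Q eps lam d F))
       \<and> inst_op Q eps lam 0 = id
       \<and> inj_on (inst_op Q eps lam) (Lambda K)"
proof (intro conjI ballI allI impI)
  fix d d' :: "int^'r" and F
  assume g: "generic_support Q eps lam F"
  show "inst_op Q eps lam d (inst_op Q eps lam d' F) = inst_op Q eps lam (d + d') F"
    by (rule inst_comp[OF assms(1) g])
  show "inst_op Q eps lam d (inst_op Q eps lam d' F) = inst_op Q eps lam d' (inst_op Q eps lam d F)"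
    using inst_comp[OF assms(1) g, of d d'] inst_comp[OF assms(1) g, of d' d]
    by (simp add: add.commute)
next
  show "inst_op Q eps lam 0 = id"
  proof -
    have z: "(\<chi> a. (0::complex)) = 0" by (simp add: vec_eq_iff)
    show ?thesis by (auto simp: fun_eq_iff inst_op_def inst_coeff_def cvec_def poch_def z)
  qed
next
  show "inj_on (inst_op Q eps lam) (Lambda K)"
  proof (rule inj_onI)
    fix d d' :: "int^'r"
    assume eq: "inst_op Q eps lam d = inst_op Q eps lam d'"
    obtain s0 where s0: "inst_coeff Q eps lam d s0 \<noteq> 0"
      using exists_nonzero_coeff[OF assms(1)] by blast
    define L where "L e = (\<chi> a. lam * cvec e $ a)" for e :: "int^'r"
    define F where "F s = (if s = s0 then 1 else (0::complex))" for s
    define u where "u = s0 - L d"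
    have "inst_op Q eps lam d F u = inst_coeff Q eps lam d s0"
      unfolding inst_op_def L_def[symmetric] u_def F_def by simp
    then have "inst_op Q eps lam d' F u \<noteq> 0" using eq s0 by simp
    then have "u + L d' = s0" unfolding inst_op_def L_def[symmetric] F_def
      by (auto split: if_splits)
    then have "L d' = L d" unfolding u_def by (simp add: algebra_simps)
    then show "d = d'" using assms(1) unfolding L_def
      by (simp add: vec_eq_iff cvec_def)
  qed
qed

end
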